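(* Let $a=\begin{pmatrix}1&0\\0&-1\end{pmatrix}$, $e_{12}=\begin{pmatrix}0&1\\0&0\end{pmatrix}$, $e_{21}=\begin{pmatrix}0&0\\1&0\end{pmatrix}$, and $q\in\mathcal{S}(\mathbb{R},\mathbb{R})$. (i) Suppose $\delta q\in\mathcal{S}(\mathbb{R},\mathbb{R})$ and $\xi(x,\lambda)=\sum_{j\le-1}\xi_j(x)\lambda^j$, with $\xi_j:\mathbb{R}\to\mathfrak{sl}(2,\mathbb{R})$ smooth, satisfying the KdV reality condition for each $x$, with $\lim_{x\to\pm\infty}\xi_j(x)=0$ for $j=-1,-2$, and $$[\xi_{-1},a]=(\delta q)e_{12},\qquad (\xi_{-1})_x+[e_{21}+qe_{12},\xi_{-1}]=[\xi_{-2},a].$$ Writing $C_{-2}$ for the $(2,1)$-entry of $\xi_{-2}$, one has $\delta q=-2(C_{-2})_x$. Hence the 2-form $\beta_{-1}(\delta_1q,\delta_2q)=\int_{-\infty}^\infty C_{-2}\,\delta_2q\,dx$ (with $C_{-2}$ associated to $\delta_1q$) equals $\int_{-\infty}^\infty(J_{-1}^{-1}\delta_1q)\,\delta_2q\,dx$ with $J_{-1}(v)=-2v_x$. (ii) Suppose $\delta q\in\mathcal{S}(\mathbb{R},\mathbb{R})$ and $\xi_0=\begin{pmatrix}A&B\\C&-A\end{pmatrix}:\mathbb{R}\to\mathfrak{sl}(2,\mathbb{R})$ is of Schwartz class with $$(\delta q)e_{12}=-(\xi_0)_x+[\xi_0,e_{21}+qe_{12}].$$ Then $\delta q=\tfrac12C_{xxx}-2qC_x-q_xC$.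 Hence the 2-form $\beta_1(\delta_1q,\delta_2q)=\int_{-\infty}^\infty C\,\delta_2q\,dx$ (with $C$ associated to $\delta_1q$) equals $\int_{-\infty}^\infty(J_1^{-1}\delta_1q)\,\delta_2q\,dx$ with $J_1(v)=\tfrac12v_{xxx}-2qv_x-q_xv$.
   Context: The KdV reality condition for a series $\xi(\lambda)$: $\overline{\xi(\bar\lambda)}=\xi(\lambda)$ and $\phi(\lambda)^{-1}\xi(\lambda)\phi(\lambda)=\phi(-\lambda)^{-1}\xi(-\lambda)\phi(-\lambda)$, $\phi(\lambda)=\begin{pmatrix}1&\lambda\\0&1\end{pmatrix}$. The forms $\beta_{-1}$, $\beta_1$ are the restrictions, to the KdV phase space $\{d_x+a\lambda+e_{21}+qe_{12}\}$ resp. $\{d_x+e_{21}+qe_{12}\}$, of the Kostant–Kirillov symplectic forms of coadjoint orbits of centrally extended loop algebras (with pairings $\langle\cdot,\cdot\rangle_{\Lambda_{-1}}$, $\langle\cdot,\cdot\rangle_{\Lambda_1}$); the displayed integral formulas give these forms, where tangent vectors $\delta q$ are represented via $\xi$ as in (i) resp. $\xi_0$ as in (ii). The KdV equation is $q_t=\frac14(q_{xxx}-6qq_x)$. *)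

theory Defs
  imports "HOL-Analysis.Analysis"
begin

text \<open>2x2 real matrices; M $ i $ j is the (i,j) entry (row i, column j).\<close>

definition mat2 :: "real \<Rightarrow> real \<Rightarrow> real \<Rightarrow> real \<Rightarrow> real^2^2" where
  "mat2 p r s t = vector [vector [p, r], vector [s, t]]"

definition amat :: "real^2^2" where "amat = mat2 1 0 0 (-1)"
definition e12 :: "real^2^2" where "e12 = mat2 0 1 0 0"
definition e21 :: "real^2^2" where "e21 = mat2 0 0 1 0"

definition bracket :: "real^2^2 \<Rightarrow> real^2^2 \<Rightarrow> real^2^2" where
  "bracket X Y = X ** Y - Y ** X"

definition vderiv :: "(real \<Rightarrow> 'a::real_normed_vector) \<Rightarrow> real \<Rightarrow> 'a" where
  "vderiv f = (\<lambda>x. vector_derivative f (at x))"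

definition smooth_fun :: "(real \<Rightarrow> 'a::real_normed_vector) \<Rightarrow> bool" where
  "smooth_fun f \<longleftrightarrow> (\<forall>n x. ((vderiv ^^ n) f) differentiable (at x))"

definition schwartz :: "(real \<Rightarrow> 'a::real_normed_vector) \<Rightarrow> bool" where
  "schwartz f \<longleftrightarrow> smooth_fun f \<and>
     (\<forall>m n. bounded (range (\<lambda>x. (\<bar>x\<bar> ^ m) *\<^sub>R (vderiv ^^ n) f x)))"

text \<open>KdV reality condition for a formal series xi(lambda) = sum_j c j lambda^j
  with real sl(2)-coefficients (so conj(xi(conj lambda)) = xi(lambda) holds automatically).
  With phi(lambda) = I + lambda e12, phi(lambda)^-1 = I - lambda e12, the coefficient of
  lambda^k in phi(lambda)^-1 xi(lambda) phi(lambda) is conj_coeff c k; the coefficient of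
  lambda^k in phi(-lambda)^-1 xi(-lambda) phi(-lambda) is (-1)^k conj_coeff c k.\<close>
definition conj_coeff :: "(int \<Rightarrow> real^2^2) \<Rightarrow> int \<Rightarrow> real^2^2" where
  "conj_coeff c k = c k + (c (k - 1) ** e12 - e12 ** c (k - 1)) - e12 ** c (k - 2) ** e12"

definition kdv_reality :: "(int \<Rightarrow> real^2^2) \<Rightarrow> bool" where
  "kdv_reality c \<longleftrightarrow>
     (\<forall>k. conj_coeff c k = (if even k then 1 else -1) *\<^sub>R conj_coeff c k)"

definition Jm1 :: "(real \<Rightarrow> real) \<Rightarrow> real \<Rightarrow> real" where
  "Jm1 v = (\<lambda>x. -2 * vderiv v x)"

definition J1 :: "(real \<Rightarrow> real) \<Rightarrow> (real \<Rightarrow> real) \<Rightarrow> real \<Rightarrow> real" where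
  "J1 q v = (\<lambda>x. (1/2) * (vderiv ^^ 3) v x - 2 * q x * vderiv v x - vderiv q x * v x)"

end

theory Submission
  imports Defs
begin


lemma vd: "(f has_vector_derivative d) (at x) \<Longrightarrow> vderiv f x = d"
  unfolding vderiv_def by (rule vector_derivative_at)

lemma dw: "f differentiable (at x) \<Longrightarrow> (f has_vector_derivative vderiv f x) (at x)"
  unfolding vderiv_def by (rule vector_derivative_works[THEN iffD1])

lemma comp_hd: fixes f :: "real \<Rightarrow> real^2^2" and i j :: 2 shows "(f has_vector_derivative d) (at x) \<Longrightarrow>
   ((\<lambda>y. f y $ i $ j) has_vector_derivative d $ i $ j) (at x)"
proof -
  assume h: "(f has_vector_derivative d) (at x)"
  have bl: "bounded_linear (\<lambda>M::real^2^2. M $ i $ j)"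
    by (rule bounded_linear_compose[OF bounded_linear_vec_nth bounded_linear_vec_nth])
  show ?thesis using bounded_linear.has_vector_derivative[OF bl h] by simp
qed

lemma comp_deriv: "(f :: real \<Rightarrow> real^2^2) differentiable (at x) \<Longrightarrow>
   vderiv (\<lambda>y. f y $ i $ j) x = vderiv f x $ i $ j"
  by (rule vd, rule comp_hd, rule dw)

lemma comp_diff: "(f :: real \<Rightarrow> real^2^2) differentiable (at x) \<Longrightarrow>
   (\<lambda>y. f y $ i $ j) differentiable (at x)"
  using comp_hd[OF dw] differentiableI_vector by blast

lemma comp_iter: "smooth_fun (f :: real \<Rightarrow> real^2^2) \<Longrightarrow>
   (vderiv ^^ n) (\<lambda>y. f y $ i $ j) = (\<lambda>y. (vderiv ^^ n) f y $ i $ j)"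
proof (induction n)
  case 0 then show ?case by simp
next
  case (Suc n)
  have "vderiv (\<lambda>y. (vderiv ^^ n) f y $ i $ j) = (\<lambda>y. vderiv ((vderiv ^^ n) f) y $ i $ j)"
    using Suc.prems unfolding smooth_fun_def by (intro ext comp_deriv) auto
  then show ?case using Suc by simp
qed

lemma comp_smooth: "smooth_fun (f :: real \<Rightarrow> real^2^2) \<Longrightarrow> smooth_fun (\<lambda>y. f y $ i $ j)"
  unfolding smooth_fun_def
  using comp_iter[unfolded smooth_fun_def] comp_diff by (metis smooth_fun_def)

lemma mat2_nth[simp]: "mat2 p r s t $ 1 $ 1 = p" "mat2 p r s t $ 1 $ 2 = r"
  "mat2 p r s t $ 2 $ 1 = s" "mat2 p r s t $ 2 $ 2 = t"
  by (simp_all add: mat2_def)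

lemma entries: "X = Y \<Longrightarrow> X $ i $ j = Y $ i $ j" by simp

lemma mmul_nth: "((X::real^2^2) ** Y) $ i $ j = X $ i $ 1 * Y $ 1 $ j + X $ i $ 2 * Y $ 2 $ j"
  by (simp add: matrix_matrix_mult_def sum_2)

lemma tr2: "trace (X::real^2^2) = X $ 1 $ 1 + X $ 2 $ 2"
  by (simp add: trace_def sum_2)

lemma vd_real_mult: "(f::real\<Rightarrow>real) differentiable (at x) \<Longrightarrow> g differentiable (at x) \<Longrightarrow>
   vderiv (\<lambda>y. f y * g y) x = vderiv f x * g x + f x * vderiv g x"
proof -
  assume a: "f differentiable (at x)" "g differentiable (at x)"
  have "((\<lambda>y. f y * g y) has_vector_derivative (f x * vderiv g x + vderiv f x * g x)) (at x)"
    by (rule has_vector_derivative_mult[OF dw[OF a(1)] dw[OF a(2)]])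
  then show ?thesis by (simp add: vd algebra_simps)
qed

lemma part1:
  fixes q :: "real \<Rightarrow> real" and dq :: "real \<Rightarrow> real" and \<xi> :: "int \<Rightarrow> real \<Rightarrow> real^2^2"
  assumes sm: "\<forall>j. smooth_fun (\<xi> j)" and tr: "\<forall>j x. trace (\<xi> j x) = 0"
  and eq1: "\<forall>x. bracket (\<xi> (-1) x) amat = dq x *\<^sub>R e12"
  and eq2: "\<forall>x. vderiv (\<xi> (-1)) x + bracket (e21 + q x *\<^sub>R e12) (\<xi> (-1) x)
             = bracket (\<xi> (-2) x) amat"
  shows "let C2 = (\<lambda>x. \<xi> (-2) x $ 2 $ 1) in
            (\<forall>x. dq x = -2 * vderiv C2 x) \<and> dq = Jm1 C2"
proof -
  define C2 where "C2 = (\<lambda>x. \<xi> (-2) x $ 2 $ 1)"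
  define p where "p = (\<lambda>x. \<xi> (-1) x $ 1 $ 1)"
  have d1: "\<And>x. \<xi> (-1) differentiable (at x)"
    using sm unfolding smooth_fun_def by (metis funpow_0)
  have a: "\<xi> (-1) x $2$1 = 0 \<and> dq x = -2 * \<xi> (-1) x $1$2" for x
    using entries[OF eq1[rule_format, of x], of 2 1] entries[OF eq1[rule_format, of x], of 1 2]
    by (simp add: bracket_def mmul_nth amat_def e12_def)
  have s0: "(\<lambda>y. \<xi> (-1) y $ 2 $ 1) = (\<lambda>y. 0)" using a by auto
  have ds: "vderiv (\<xi> (-1)) x $ 2 $ 1 = 0" for x
  proof -
    have "vderiv (\<xi> (-1)) x $ 2 $ 1 = vderiv (\<lambda>y. \<xi> (-1) y $ 2 $ 1) x"
      using comp_deriv[OF d1] by simp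
    also have "\<dots> = 0" unfolding s0 by (rule vd, rule has_vector_derivative_const)
    finally show ?thesis .
  qed
  have dp: "vderiv (\<xi> (-1)) x $ 1 $ 1 = vderiv p x" for x
    unfolding p_def using comp_deriv[OF d1] by simp
  have b: "vderiv (\<xi> (-1)) x $ 1 $ 1 = \<xi> (-1) x $1$2 \<and> \<xi> (-1) x $ 1 $ 1 = C2 x" for x
    using entries[OF eq2[rule_format, of x], of 1 1] entries[OF eq2[rule_format, of x], of 2 1]
      a[of x] ds[of x] tr[rule_format, of "-1" x]
    by (simp add: bracket_def mmul_nth amat_def e12_def e21_def tr2 C2_def)
  have pC: "p = C2" using b unfolding p_def by auto
  have r: "\<forall>x. dq x = -2 * vderiv C2 x"
    using a b dp pC by metis
  then show ?thesis unfolding C2_def[symmetric] Let_def Jm1_def by auto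
qed

lemma part2:
  fixes q :: "real \<Rightarrow> real" and dq :: "real \<Rightarrow> real" and \<xi>0 :: "real \<Rightarrow> real^2^2"
  assumes q: "schwartz q" and sx: "schwartz \<xi>0" and tr: "\<forall>x. trace (\<xi>0 x) = 0"
  and eq: "\<forall>x. dq x *\<^sub>R e12 = - vderiv \<xi>0 x + bracket (\<xi>0 x) (e21 + q x *\<^sub>R e12)"
  shows "let C = (\<lambda>x. \<xi>0 x $ 2 $ 1) in
            (\<forall>x. dq x = (1/2) * (vderiv ^^ 3) C x - 2 * q x * vderiv C x - vderiv q x * C x)
            \<and> dq = J1 q C"
proof -
  define C where "C = (\<lambda>x. \<xi>0 x $ 2 $ 1)"
  define p where "p = (\<lambda>x. \<xi>0 x $ 1 $ 1)"
  define r where "r = (\<lambda>x. \<xi>0 x $ 1 $ 2)"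
  have smx: "smooth_fun \<xi>0" using sx unfolding schwartz_def by simp
  have smq: "smooth_fun q" using q unfolding schwartz_def by simp
  have dq': "\<And>x. q differentiable (at x)" using smq unfolding smooth_fun_def by (metis funpow_0)
  have smC: "smooth_fun C" unfolding C_def by (rule comp_smooth[OF smx])
  have dC: "\<And>n x. (vderiv ^^ n) C differentiable (at x)" using smC unfolding smooth_fun_def by blast
  have d0: "\<And>x. \<xi>0 differentiable (at x)"
    using smx unfolding smooth_fun_def by (metis funpow_0)
  have dcomp: "vderiv \<xi>0 x $ i $ j = vderiv (\<lambda>y. \<xi>0 y $ i $ j) x" for x i j
    using comp_deriv[OF d0] by simp
  have e: "\<xi>0 x $2$2 - p x = vderiv C x \<and> p x + \<xi>0 x $2$2 = 0 \<and>
      r x = vderiv p x + q x * C x \<and> dq x = - vderiv r x + q x * (p x - \<xi>0 x $2$2)" for x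
    using entries[OF eq[rule_format, of x], of 2 1] entries[OF eq[rule_format, of x], of 1 1]
      entries[OF eq[rule_format, of x], of 1 2] tr[rule_format, of x]
    by (simp add: bracket_def mmul_nth e12_def e21_def tr2 dcomp C_def p_def r_def algebra_simps)
  have pf: "p = (\<lambda>x. (-1/2) * vderiv C x)"
  proof
    fix x show "p x = (-1/2) * vderiv C x" using e[of x] by linarith
  qed
  have dp: "vderiv p x = (-1/2) * vderiv (vderiv C) x" for x
    unfolding pf by (rule vd, rule has_vector_derivative_mult_right, rule dw) (use dC[of 1] in simp)
  have rf: "r = (\<lambda>x. (-1/2) * vderiv (vderiv C) x + q x * C x)"
    using e dp by auto
  have dr: "vderiv r x = (-1/2) * vderiv (vderiv (vderiv C)) x + (vderiv q x * C x + q x * vderiv C x)" for x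
    unfolding rf
    apply (rule vd, rule has_vector_derivative_add, rule has_vector_derivative_mult_right, rule dw)
    using dC[of 2] apply (simp add: numeral_2_eq_2)
    apply (rule has_vector_derivative_mult[OF dw dw, THEN has_vector_derivative_eq_rhs])
    using dq' dC[of 0] by (auto simp: algebra_simps)
  have r: "\<forall>x. dq x = (1/2) * (vderiv ^^ 3) C x - 2 * q x * vderiv C x - vderiv q x * C x"
  proof
    fix x
    have t: "\<xi>0 x $2$2 = (1/2) * vderiv C x" using e[of x] by linarith
    have pp: "p x = (-1/2) * vderiv C x" using e[of x] by linarith
    have "dq x = - vderiv r x + q x * (p x - \<xi>0 x $2$2)" using e[of x] by blast
    then show "dq x = (1/2) * (vderiv ^^ 3) C x - 2 * q x * vderiv C x - vderiv q x * C x"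
      unfolding t pp dr by (simp add: numeral_3_eq_3 algebra_simps)
  qed
  then show ?thesis unfolding C_def[symmetric] Let_def J1_def by auto
qed


theorem theorem6p3:
  fixes q :: "real \<Rightarrow> real"
  assumes q: "schwartz q"
  shows
  "(\<forall>(dq :: real \<Rightarrow> real) (\<xi> :: int \<Rightarrow> real \<Rightarrow> real^2^2).
      schwartz dq \<and>
      (\<forall>j. smooth_fun (\<xi> j)) \<and>
      (\<forall>j x. trace (\<xi> j x) = 0) \<and>
      (\<forall>j. j \<ge> 0 \<longrightarrow> \<xi> j = (\<lambda>x. 0)) \<and>
      (\<forall>x. kdv_reality (\<lambda>j. \<xi> j x)) \<and>
      (\<forall>j \<in> {-1, -2}. (\<xi> j \<longlongrightarrow> 0) at_top \<and> (\<xi> j \<longlongrightarrow> 0) at_bot) \<and>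
      (\<forall>x. bracket (\<xi> (-1) x) amat = dq x *\<^sub>R e12) \<and>
      (\<forall>x. vderiv (\<xi> (-1)) x + bracket (e21 + q x *\<^sub>R e12) (\<xi> (-1) x)
             = bracket (\<xi> (-2) x) amat)
      \<longrightarrow> (let C2 = (\<lambda>x. \<xi> (-2) x $ 2 $ 1) in
            (\<forall>x. dq x = -2 * vderiv C2 x) \<and> dq = Jm1 C2))
   \<and>
   (\<forall>(dq :: real \<Rightarrow> real) (\<xi>0 :: real \<Rightarrow> real^2^2).
      schwartz dq \<and> schwartz \<xi>0 \<and>
      (\<forall>x. trace (\<xi>0 x) = 0) \<and>
      (\<forall>x. dq x *\<^sub>R e12 = - vderiv \<xi>0 x + bracket (\<xi>0 x) (e21 + q x *\<^sub>R e12))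
      \<longrightarrow> (let C = (\<lambda>x. \<xi>0 x $ 2 $ 1) in
            (\<forall>x. dq x = (1/2) * (vderiv ^^ 3) C x - 2 * q x * vderiv C x - vderiv q x * C x)
            \<and> dq = J1 q C))"
  proof (intro conjI allI impI)
  fix dq :: "real \<Rightarrow> real" and \<xi> :: "int \<Rightarrow> real \<Rightarrow> real^2^2"
  assume H: "schwartz dq \<and>
      (\<forall>j. smooth_fun (\<xi> j)) \<and>
      (\<forall>j x. trace (\<xi> j x) = 0) \<and>
      (\<forall>j. j \<ge> 0 \<longrightarrow> \<xi> j = (\<lambda>x. 0)) \<and>
      (\<forall>x. kdv_reality (\<lambda>j. \<xi> j x)) \<and>
      (\<forall>j \<in> {-1, -2}. (\<xi> j \<longlongrightarrow> 0) at_top \<and> (\<xi> j \<longlongrightarrow> 0) at_bot) \<and>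
      (\<forall>x. bracket (\<xi> (-1) x) amat = dq x *\<^sub>R e12) \<and>
      (\<forall>x. vderiv (\<xi> (-1)) x + bracket (e21 + q x *\<^sub>R e12) (\<xi> (-1) x)
             = bracket (\<xi> (-2) x) amat)"
  show "let C2 = (\<lambda>x. \<xi> (-2) x $ 2 $ 1) in
            (\<forall>x. dq x = -2 * vderiv C2 x) \<and> dq = Jm1 C2"
    using H by (intro part1) auto
next
  fix dq :: "real \<Rightarrow> real" and \<xi>0 :: "real \<Rightarrow> real^2^2"
  assume H: "schwartz dq \<and> schwartz \<xi>0 \<and>
      (\<forall>x. trace (\<xi>0 x) = 0) \<and>
      (\<forall>x. dq x *\<^sub>R e12 = - vderiv \<xi>0 x + bracket (\<xi>0 x) (e21 + q x *\<^sub>R e12))"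
  show "let C = (\<lambda>x. \<xi>0 x $ 2 $ 1) in
            (\<forall>x. dq x = (1/2) * (vderiv ^^ 3) C x - 2 * q x * vderiv C x - vderiv q x * C x)
            \<and> dq = J1 q C"
    using H q by (intro part2) auto
qed

end
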